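(* Let $x\in\Sigma^*$ be a word and let $Y\subseteq\Sigma^*$ be a nonempty language recognized by a nondeterministic finite automaton with $n$ states. Then there exists $y_x\in Y$ with $\mathrm{ned}(x,y_x)=\inf_{y\in Y}\mathrm{ned}(x,y)$, and moreover there exists an edit path $p$ from $x$ to $y_x$ with $\mathrm{wgt}(p)/|p|=\mathrm{ned}(x,y_x)$ and $|p|\le n(|x|+1)$.
   Context: $\Sigma$ is a finite alphabet. An edit path from $x$ to $y$ is a sequence $p=(a_1,b_1)\cdots(a_n,b_n)$ with $(a_i,b_i)\in(\Sigma\cup\{\varepsilon\})^2\setminus\{(\varepsilon,\varepsilon)\}$, $a_1\cdots a_n=x$, $b_1\cdots b_n=y$; $|p|=n$ and $\mathrm{wgt}(p)=|\{i:a_i\ne b_i\}|$. $\mathrm{ned}(x,y)=\min_p\mathrm{wgt}(p)/|p|$ over edit paths from $x$ to $y$ ($\mathrm{ned}(\varepsilon,\varepsilon)=0$). *)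

theory Defs
  imports Main "HOL.Real"
begin

text \<open>Words over the alphabet 'a are lists; the empty symbol is None.
An edit operation is a pair (a,b) of optional symbols, not both None.\<close>

type_synonym 'a edit_op = "'a option \<times> 'a option"

definition opt_word :: "'a option \<Rightarrow> 'a list" where
  "opt_word a = (case a of None \<Rightarrow> [] | Some c \<Rightarrow> [c])"

definition edit_path :: "'a edit_op list \<Rightarrow> 'a list \<Rightarrow> 'a list \<Rightarrow> bool" where
  "edit_path p x y \<longleftrightarrow>
     (\<forall>e\<in>set p. e \<noteq> (None, None)) \<and>
     concat (map (\<lambda>e. opt_word (fst e)) p) = x \<and>
     concat (map (\<lambda>e. opt_word (snd e)) p) = y"

definition wgt :: "'a edit_op list \<Rightarrow> nat" where
  "wgt p = length (filter (\<lambda>e. fst e \<noteq> snd e) p)"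

definition ned :: "'a list \<Rightarrow> 'a list \<Rightarrow> real" where
  "ned x y = (if x = [] \<and> y = [] then 0
              else Min {real (wgt p) / real (length p) | p. edit_path p x y})"

definition nfa :: "'s set \<Rightarrow> ('s \<Rightarrow> 'a \<Rightarrow> 's set) \<Rightarrow> 's set \<Rightarrow> 's set \<Rightarrow> bool" where
  "nfa Q \<delta> I F \<longleftrightarrow> finite Q \<and> I \<subseteq> Q \<and> F \<subseteq> Q \<and> (\<forall>q\<in>Q. \<forall>a. \<delta> q a \<subseteq> Q)"

fun nfa_run :: "('s \<Rightarrow> 'a \<Rightarrow> 's set) \<Rightarrow> 's set \<Rightarrow> 'a list \<Rightarrow> 's set" where
  "nfa_run \<delta> S [] = S"
| "nfa_run \<delta> S (a # w) = nfa_run \<delta> (\<Union>q\<in>S. \<delta> q a) w"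

definition nfa_lang :: "('s \<Rightarrow> 'a \<Rightarrow> 's set) \<Rightarrow> 's set \<Rightarrow> 's set \<Rightarrow> 'a list set" where
  "nfa_lang \<delta> I F = {w. nfa_run \<delta> I w \<inter> F \<noteq> {}}"

end

theory Submission
  imports Defs
begin

lemma run_union: "nfa_run \<delta> S w = (\<Union>q\<in>S. nfa_run \<delta> {q} w)"
proof (induction w arbitrary: S)
  case Nil then show ?case by simp
next
  case (Cons a w)
  have 1: "nfa_run \<delta> S (a # w) = (\<Union>q'\<in>(\<Union>q\<in>S. \<delta> q a). nfa_run \<delta> {q'} w)"
  proof -
    have "nfa_run \<delta> S (a # w) = nfa_run \<delta> (\<Union>q\<in>S. \<delta> q a) w" by simp
    also have "\<dots> = (\<Union>q'\<in>(\<Union>q\<in>S. \<delta> q a). nfa_run \<delta> {q'} w)" by (rule Cons.IH)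
    finally show ?thesis .
  qed
  have 2: "nfa_run \<delta> {q} (a # w) = (\<Union>q'\<in>\<delta> q a. nfa_run \<delta> {q'} w)" for q
  proof -
    have "nfa_run \<delta> {q} (a # w) = nfa_run \<delta> (\<delta> q a) w" by simp
    also have "\<dots> = (\<Union>q'\<in>\<delta> q a. nfa_run \<delta> {q'} w)" by (rule Cons.IH)
    finally show ?thesis .
  qed
  show ?case unfolding 1 2 by blast
qed

lemma run_append: "nfa_run \<delta> S (u @ v) = nfa_run \<delta> (nfa_run \<delta> S u) v"
  by (induction u arbitrary: S) auto

lemma run_subset: "nfa Q \<delta> I F \<Longrightarrow> S \<subseteq> Q \<Longrightarrow> nfa_run \<delta> S w \<subseteq> Q"
proof (induction w arbitrary: S)
  case Nil then show ?case by simp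
next
  case (Cons a w)
  have "(\<Union>q\<in>S. \<delta> q a) \<subseteq> Q" using Cons.prems unfolding nfa_def by blast
  then show ?case using Cons by simp
qed

lemma run_Cons_single: "s \<in> nfa_run \<delta> {q} (b # w) \<longleftrightarrow> (\<exists>q1\<in>\<delta> q b. s \<in> nfa_run \<delta> {q1} w)"
  using run_union[of \<delta> "\<delta> q b" w] by auto

lemma run_snoc: "nfa_run \<delta> S (w @ [b]) = (\<Union>q\<in>nfa_run \<delta> S w. \<delta> q b)"
  by (simp add: run_append)

inductive ew :: "('s \<Rightarrow> 'a \<Rightarrow> 's set) \<Rightarrow> 's \<Rightarrow> 'a list \<Rightarrow> 'a edit_op list \<Rightarrow> 'a list \<Rightarrow> 's \<Rightarrow> bool"
  for \<delta> where
  ew_nil: "ew \<delta> q [] [] [] q"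
| ew_del: "ew \<delta> q x p y q' \<Longrightarrow> ew \<delta> q (a # x) ((Some a, None) # p) y q'"
| ew_ins: "q1 \<in> \<delta> q b \<Longrightarrow> ew \<delta> q1 x p y q' \<Longrightarrow> ew \<delta> q x ((None, Some b) # p) (b # y) q'"
| ew_sub: "q1 \<in> \<delta> q b \<Longrightarrow> ew \<delta> q1 x p y q' \<Longrightarrow> ew \<delta> q (a # x) ((Some a, Some b) # p) (b # y) q'"

lemma ew_sound: "ew \<delta> q x p y q' \<Longrightarrow> edit_path p x y \<and> q' \<in> nfa_run \<delta> {q} y"
proof (induction rule: ew.induct)
  case (ew_nil q)
  then show ?case by (simp add: edit_path_def)
next
  case (ew_del q x p y q' a)
  then show ?case by (simp add: edit_path_def opt_word_def)
next
  case (ew_ins q1 q b x p y q')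
  have "edit_path ((None, Some b) # p) x (b # y)"
    using ew_ins by (simp add: edit_path_def opt_word_def)
  moreover have "q' \<in> nfa_run \<delta> {q} (b # y)"
    unfolding run_Cons_single using ew_ins by blast
  ultimately show ?case by blast
next
  case (ew_sub q1 q b x p y q' a)
  have "edit_path ((Some a, Some b) # p) (a # x) (b # y)"
    using ew_sub by (simp add: edit_path_def opt_word_def)
  moreover have "q' \<in> nfa_run \<delta> {q} (b # y)"
    unfolding run_Cons_single using ew_sub by blast
  ultimately show ?case by blast
qed

lemma ep_Cons_del: "edit_path ((Some a, None) # p) x y \<Longrightarrow> \<exists>x'. x = a # x' \<and> edit_path p x' y"
  by (auto simp: edit_path_def opt_word_def)
lemma ep_Cons_ins: "edit_path ((None, Some b) # p) x y \<Longrightarrow> \<exists>y'. y = b # y' \<and> edit_path p x y'"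
  by (auto simp: edit_path_def opt_word_def)
lemma ep_Cons_sub: "edit_path ((Some a, Some b) # p) x y \<Longrightarrow> \<exists>x' y'. x = a # x' \<and> y = b # y' \<and> edit_path p x' y'"
  by (auto simp: edit_path_def opt_word_def)
lemma ep_Cons_nn: "\<not> edit_path ((None, None) # p) x y"
  by (auto simp: edit_path_def)

lemma ew_complete: "edit_path p x y \<Longrightarrow> q' \<in> nfa_run \<delta> {q} y \<Longrightarrow> ew \<delta> q x p y q'"
proof (induction p arbitrary: x y q)
  case Nil then show ?case by (simp add: edit_path_def ew_nil)
next
  case (Cons e p)
  obtain a b where e: "e = (a, b)" by (cases e)
  show ?case
  proof (cases a)
    case aN: None
    show ?thesis
    proof (cases b)
      case bN: None
      have "edit_path ((None, None) # p) x y" using Cons.prems(1) unfolding e aN bN .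
      then show ?thesis using ep_Cons_nn by blast
    next
      case bS: (Some c)
      have "edit_path ((None, Some c) # p) x y" using Cons.prems(1) unfolding e aN bS .
      from ep_Cons_ins[OF this] obtain y' where y: "y = c # y'" and ep: "edit_path p x y'" by blast
      have "q' \<in> nfa_run \<delta> {q} (c # y')" using Cons.prems(2) unfolding y .
      then obtain q1 where q1: "q1 \<in> \<delta> q c" "q' \<in> nfa_run \<delta> {q1} y'"
        unfolding run_Cons_single by blast
      have "ew \<delta> q1 x p y' q'" using Cons.IH[OF ep q1(2)] .
      then have "ew \<delta> q x ((None, Some c) # p) (c # y') q'" by (rule ew.ew_ins[where \<delta>=\<delta>, OF q1(1)])
      then show ?thesis unfolding e aN bS y .
    qed
  next
    case aS: (Some a')
    show ?thesis
    proof (cases b)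
      case bN: None
      have "edit_path ((Some a', None) # p) x y" using Cons.prems(1) unfolding e aS bN .
      from ep_Cons_del[OF this] obtain x' where x: "x = a' # x'" and ep: "edit_path p x' y" by blast
      have "ew \<delta> q x' p y q'" using Cons.IH[OF ep Cons.prems(2)] .
      then have "ew \<delta> q (a' # x') ((Some a', None) # p) y q'" by (rule ew.ew_del)
      then show ?thesis unfolding e aS bN x .
    next
      case bS: (Some c)
      have "edit_path ((Some a', Some c) # p) x y" using Cons.prems(1) unfolding e aS bS .
      from ep_Cons_sub[OF this] obtain x' y' where x: "x = a' # x'" and y: "y = c # y'" and ep: "edit_path p x' y'" by blast
      have "q' \<in> nfa_run \<delta> {q} (c # y')" using Cons.prems(2) unfolding y .
      then obtain q1 where q1: "q1 \<in> \<delta> q c" "q' \<in> nfa_run \<delta> {q1} y'"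
        unfolding run_Cons_single by blast
      have "ew \<delta> q1 x' p y' q'" using Cons.IH[OF ep q1(2)] .
      then have "ew \<delta> q (a' # x') ((Some a', Some c) # p) (c # y') q'" by (rule ew.ew_sub[where \<delta>=\<delta>, OF q1(1)])
      then show ?thesis unfolding e aS bS x y .
    qed
  qed
qed

definition ins :: "'a list \<Rightarrow> 'a edit_op list" where
  "ins w = map (\<lambda>b. (None, Some b)) w"

lemma ew_ins_list: "s \<in> nfa_run \<delta> {q} w \<Longrightarrow> ew \<delta> s x r y q' \<Longrightarrow> ew \<delta> q x (ins w @ r) (w @ y) q'"
proof (induction w arbitrary: q)
  case Nil then show ?case by (simp add: ins_def)
next
  case (Cons b w)
  then obtain q1 where "q1 \<in> \<delta> q b" "s \<in> nfa_run \<delta> {q1} w" using run_Cons_single by metis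
  then have "ew \<delta> q1 x (ins w @ r) (w @ y) q'" using Cons.IH Cons.prems by blast
  then show ?case using \<open>q1 \<in> \<delta> q b\<close> ew.ew_ins by (simp add: ins_def)
qed

lemma wgt_Cons: "wgt (e # p) = (if fst e \<noteq> snd e then 1 else 0) + wgt p"
  by (simp add: wgt_def)
lemma wgt_append: "wgt (p @ q) = wgt p + wgt q"
  by (simp add: wgt_def)
lemma wgt_ins: "wgt (ins w) = length w"
  by (simp add: wgt_def ins_def comp_def)
lemma wgt_le: "wgt p \<le> length p"
  by (simp add: wgt_def)

lemma length_ins[simp]: "length (ins w) = length w"
  by (simp add: ins_def)

lemma block_short:
  assumes nfa: "nfa Q \<delta> I F" and qQ: "q \<in> Q" and sw: "s \<in> nfa_run \<delta> {q} w"
  shows "\<exists>w'. s \<in> nfa_run \<delta> {q} w' \<and> length w' < card Q \<and> length w' \<le> length w"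
proof (cases "length w < card Q")
  case True then show ?thesis using sw by blast
next
  case False
  define R where "R k = {s. \<exists>w. length w \<le> k \<and> s \<in> nfa_run \<delta> {q} w}" for k
  have finQ: "finite Q" using nfa by (simp add: nfa_def)
  have mono: "R k \<subseteq> R m" if "k \<le> m" for k m using that unfolding R_def by (blast intro: le_trans)
  have sub: "R k \<subseteq> Q" for k
  proof
    fix s assume "s \<in> R k"
    then obtain w where "s \<in> nfa_run \<delta> {q} w" unfolding R_def by blast
    then show "s \<in> Q" using run_subset[OF nfa, of "{q}" w] qQ by blast
  qed
  have step: "R (Suc k) \<subseteq> R k \<union> (\<Union>s\<in>R k. \<Union>b. \<delta> s b)" for k
  proof
    fix s assume "s \<in> R (Suc k)"
    then obtain w where w: "length w \<le> Suc k" "s \<in> nfa_run \<delta> {q} w" unfolding R_def by blast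
    show "s \<in> R k \<union> (\<Union>s\<in>R k. \<Union>b. \<delta> s b)"
    proof (cases "length w \<le> k")
      case True then show ?thesis using w unfolding R_def by blast
    next
      case False
      then obtain u b where wu: "w = u @ [b]" by (cases w rule: rev_exhaust) auto
      then have "length u \<le> k" using w by simp
      moreover have "s \<in> (\<Union>t\<in>nfa_run \<delta> {q} u. \<delta> t b)"
        using w(2) unfolding wu run_snoc .
      then obtain t where "t \<in> nfa_run \<delta> {q} u" "s \<in> \<delta> t b" by blast
      ultimately show ?thesis unfolding R_def by blast
    qed
  qed
  have step2: "(\<Union>s\<in>R k. \<Union>b. \<delta> s b) \<subseteq> R (Suc k)" for k
  proof
    fix s' assume "s' \<in> (\<Union>s\<in>R k. \<Union>b. \<delta> s b)"
    then obtain s b u where "s' \<in> \<delta> s b" "length u \<le> k" "s \<in> nfa_run \<delta> {q} u"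
      unfolding R_def by blast
    then have "s' \<in> nfa_run \<delta> {q} (u @ [b])" "length (u @ [b]) \<le> Suc k"
      unfolding run_snoc by auto
    then show "s' \<in> R (Suc k)" unfolding R_def by blast
  qed
  have stable: "R (k + j) = R k" if "R (Suc k) = R k" for k j
  proof (induction j)
    case 0 then show ?case by simp
  next
    case (Suc j)
    have "R (Suc (k + j)) \<subseteq> R k \<union> (\<Union>s\<in>R k. \<Union>b. \<delta> s b)"
      using step[of "k + j"] Suc by simp
    also have "\<dots> \<subseteq> R (Suc k)" using step2[of k] mono[of k "Suc k"] by auto
    finally have "R (Suc (k + j)) \<subseteq> R k" using that by simp
    moreover have "R k \<subseteq> R (Suc (k + j))" using mono by simp
    ultimately show ?case by simp
  qed
  have R0: "R 0 = {q}" unfolding R_def by auto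
  have card: "Suc k \<le> card (R k)" if "\<forall>j<k. R j \<noteq> R (Suc j)" for k
    using that
  proof (induction k)
    case 0 then show ?case using R0 by simp
  next
    case (Suc k)
    have ne: "R k \<noteq> R (Suc k)" using Suc.prems lessI by blast
    have "\<forall>j<k. R j \<noteq> R (Suc j)" using Suc.prems by simp
    then have IH: "Suc k \<le> card (R k)" by (rule Suc.IH)
    have "R k \<subset> R (Suc k)" using ne mono[of k "Suc k"] by (simp add: psubset_eq)
    then have "card (R k) < card (R (Suc k))"
      by (rule psubset_card_mono[OF finite_subset[OF sub finQ]])
    then show ?case using IH by simp
  qed
  obtain j where j: "j < card Q" "R (Suc j) = R j"
  proof (rule ccontr)
    assume "\<not> thesis"
    then have "\<forall>j<card Q. R j \<noteq> R (Suc j)" using that by metis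
    then have "Suc (card Q) \<le> card (R (card Q))" using card by blast
    moreover have "card (R (card Q)) \<le> card Q" using card_mono[OF finQ sub] by blast
    ultimately show False by simp
  qed
  have "s \<in> R (length w)" using sw unfolding R_def by blast
  moreover have "R (length w) = R j"
    using stable[OF j(2), of "length w - j"] j(1) False by simp
  ultimately obtain w' where "length w' \<le> j" "s \<in> nfa_run \<delta> {q} w'" unfolding R_def by blast
  then show ?thesis using j(1) False by (intro exI[of _ w']) simp
qed

lemma main_walk:
  assumes "ew \<delta> q x p y q'" "nfa Q \<delta> I F" "q \<in> Q"
  shows "\<exists>w s r y2 d. s \<in> nfa_run \<delta> {q} w \<and> ew \<delta> s x r y2 q' \<and> length w < card Q
     \<and> length r \<le> card Q * length x \<and> wgt (ins w @ r) + d = wgt p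
     \<and> length (ins w @ r) + d = length p"
  using assms(1,3)
proof (induction rule: ew.induct)
  case (ew_nil q)
  have "0 < card Q" using assms(2) ew_nil unfolding nfa_def using card_gt_0_iff by blast
  then show ?case
    by (intro exI[of _ "[]"] exI[of _ q] exI[of _ "[]"] exI[of _ "[]"] exI[of _ 0])
       (simp add: ew.ew_nil ins_def wgt_def)
next
  case (ew_del q x p y q' a)
  then obtain w s r y2 d where IH: "s \<in> nfa_run \<delta> {q} w" "ew \<delta> s x r y2 q'" "length w < card Q"
     "length r \<le> card Q * length x" "wgt (ins w @ r) + d = wgt p"
     "length (ins w @ r) + d = length p" by blast
  define r' where "r' = (Some a, None) # (ins w @ r)"
  have "ew \<delta> q (a # x) r' (w @ y2) q'"
    unfolding r'_def using ew.ew_del[OF ew_ins_list[OF IH(1,2)]] .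
  moreover have "length r' \<le> card Q * length (a # x)" using IH(3,4) by (simp add: r'_def)
  moreover have "wgt (ins [] @ r') + d = wgt ((Some a, None) # p)"
    using IH(5) by (simp add: r'_def wgt_Cons ins_def)
  moreover have "length (ins [] @ r') + d = length ((Some a, None) # p)"
    using IH(6) by (simp add: r'_def ins_def)
  moreover have "q \<in> nfa_run \<delta> {q} []" by simp
  moreover have "length ([]::'a list) < card Q" using IH(3) by simp
  ultimately show ?case by (intro exI[of _ "[]"] exI[of _ q] exI[of _ r'] exI[of _ "w @ y2"] exI[of _ d]) simp
next
  case (ew_sub q1 q b x p y q' a)
  have q1Q: "q1 \<in> Q" using ew_sub.hyps(1) ew_sub.prems assms(2) unfolding nfa_def by blast
  then obtain w s r y2 d where IH: "s \<in> nfa_run \<delta> {q1} w" "ew \<delta> s x r y2 q'" "length w < card Q"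
     "length r \<le> card Q * length x" "wgt (ins w @ r) + d = wgt p"
     "length (ins w @ r) + d = length p" using ew_sub.IH by blast
  define r' where "r' = (Some a, Some b) # (ins w @ r)"
  have "ew \<delta> q (a # x) r' (b # w @ y2) q'"
    unfolding r'_def using ew.ew_sub[where \<delta>=\<delta>, OF ew_sub.hyps(1) ew_ins_list[OF IH(1,2)]] .
  moreover have "length r' \<le> card Q * length (a # x)" using IH(3,4) by (simp add: r'_def)
  moreover have "wgt (ins [] @ r') + d = wgt ((Some a, Some b) # p)"
    using IH(5) by (simp add: r'_def wgt_Cons ins_def)
  moreover have "length (ins [] @ r') + d = length ((Some a, Some b) # p)"
    using IH(6) by (simp add: r'_def ins_def)
  moreover have "q \<in> nfa_run \<delta> {q} []" by simp
  moreover have "length ([]::'a list) < card Q" using IH(3) by simp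
  ultimately show ?case by (intro exI[of _ "[]"] exI[of _ q] exI[of _ r'] exI[of _ "b # w @ y2"] exI[of _ d]) simp
next
  case (ew_ins q1 q b x p y q')
  have q1Q: "q1 \<in> Q" using ew_ins.hyps(1) ew_ins.prems assms(2) unfolding nfa_def by blast
  then obtain w s r y2 d where IH: "s \<in> nfa_run \<delta> {q1} w" "ew \<delta> s x r y2 q'" "length w < card Q"
     "length r \<le> card Q * length x" "wgt (ins w @ r) + d = wgt p"
     "length (ins w @ r) + d = length p" using ew_ins.IH by blast
  have "s \<in> nfa_run \<delta> {q} (b # w)" unfolding run_Cons_single using IH(1) ew_ins.hyps(1) by blast
  from block_short[OF assms(2) ew_ins.prems this]
  obtain w'' where w'': "s \<in> nfa_run \<delta> {q} w''" "length w'' < card Q" "length w'' \<le> Suc (length w)"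
    by auto
  have "wgt (ins w'' @ r) + (d + (Suc (length w) - length w'')) = wgt ((None, Some b) # p)"
    using IH(5) w''(3) by (simp add: wgt_Cons wgt_append wgt_ins)
  moreover have "length (ins w'' @ r) + (d + (Suc (length w) - length w'')) = length ((None, Some b) # p)"
    using IH(6) w''(3) by simp
  ultimately show ?case using w'' IH(2,4)
    by (intro exI[of _ w''] exI[of _ s] exI[of _ r] exI[of _ y2] exI[of _ "d + (Suc (length w) - length w'')"]) simp
qed


definition ratio :: "'a edit_op list \<Rightarrow> real" where
  "ratio p = real (wgt p) / real (length p)"

lemma ep_length: "edit_path p x y \<Longrightarrow> length p \<le> length x + length y"
proof (induction p arbitrary: x y)
  case Nil then show ?case by simp
next
  case (Cons e p)
  obtain a b where e: "e = (a, b)" by (cases e)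
  show ?case
  proof (cases a)
    case aN: None
    show ?thesis
    proof (cases b)
      case bN: None
      have "edit_path ((None, None) # p) x y" using Cons.prems unfolding e aN bN .
      then show ?thesis using ep_Cons_nn by blast
    next
      case bS: (Some c)
      have "edit_path ((None, Some c) # p) x y" using Cons.prems unfolding e aN bS .
      from ep_Cons_ins[OF this] obtain y' where "y = c # y'" "edit_path p x y'" by blast
      then show ?thesis using Cons.IH[of x y'] by simp
    qed
  next
    case aS: (Some a')
    show ?thesis
    proof (cases b)
      case bN: None
      have "edit_path ((Some a', None) # p) x y" using Cons.prems unfolding e aS bN .
      from ep_Cons_del[OF this] obtain x' where "x = a' # x'" "edit_path p x' y" by blast
      then show ?thesis using Cons.IH[of x' y] by simp
    next
      case bS: (Some c)
      have "edit_path ((Some a', Some c) # p) x y" using Cons.prems unfolding e aS bS .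
      from ep_Cons_sub[OF this] obtain x' y' where "x = a' # x'" "y = c # y'" "edit_path p x' y'" by blast
      then show ?thesis using Cons.IH[of x' y'] by simp
    qed
  qed
qed

lemma ep_exists: "\<exists>p. edit_path p x y"
proof -
  have "edit_path (map (\<lambda>a. (Some a, None)) x @ ins y) x y"
    by (auto simp: edit_path_def ins_def opt_word_def comp_def)
  then show ?thesis by blast
qed

lemma ratio_finite:
  fixes P :: "'a edit_op list \<Rightarrow> bool"
  shows "finite {ratio p | p. P p \<and> length p \<le> N}"
proof -
  have "{ratio p | p. P p \<and> length p \<le> N} \<subseteq> (\<lambda>(k, m). real k / real m) ` ({..N} \<times> {..N})"
  proof
    fix r assume "r \<in> {ratio p | p. P p \<and> length p \<le> N}"
    then obtain p :: "'a edit_op list" where rp: "r = ratio p" and lp: "length p \<le> N" by auto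
    have "wgt p \<le> N" using wgt_le[of p] lp by linarith
    then have "(wgt p, length p) \<in> {..N} \<times> {..N}" using lp by simp
    then have "(\<lambda>(k, m). real k / real m) (wgt p, length p) \<in> (\<lambda>(k, m). real k / real m) ` ({..N} \<times> {..N})"
      by (rule imageI)
    then show "r \<in> (\<lambda>(k, m). real k / real m) ` ({..N} \<times> {..N})"
      unfolding rp ratio_def by simp
  qed
  then show ?thesis by (rule finite_subset) simp
qed

lemma ned_props:
  fixes x y :: "'a list"
  shows "(\<exists>p. edit_path p x y \<and> ned x y = ratio p) \<and> (\<forall>p. edit_path p x y \<longrightarrow> ned x y \<le> ratio p)"
proof (cases "x = [] \<and> y = []")
  case True
  have "p = []" if "edit_path p x y" for p using ep_length[OF that] True by simp
  moreover have "edit_path [] x y" using True by (simp add: edit_path_def)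
  ultimately show ?thesis using True
    by (intro conjI exI[of _ "[]"]) (auto simp: ned_def ratio_def wgt_def)
next
  case False
  define S where "S = {real (wgt p) / real (length p) | p. edit_path p x y}"
  have "S \<subseteq> {ratio p | p. edit_path p x y \<and> length p \<le> length x + length y}"
  proof
    fix r assume "r \<in> S"
    then obtain p :: "'a edit_op list" where rp: "r = real (wgt p) / real (length p)" and ep: "edit_path p x y"
      unfolding S_def by auto
    have "length p \<le> length x + length y" using ep_length[OF ep] .
    then show "r \<in> {ratio p | p. edit_path p x y \<and> length p \<le> length x + length y}"
      using ep unfolding rp ratio_def by blast
  qed
  then have fin: "finite S" by (rule finite_subset[OF _ ratio_finite])
  obtain p0 where "edit_path p0 x y" using ep_exists by blast
  then have ne: "S \<noteq> {}" unfolding S_def by blast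
  have nd: "ned x y = Min S" using False unfolding ned_def S_def by (simp only: if_False)
  have "Min S \<in> S" using Min_in[OF fin ne] .
  then have A: "\<exists>p. edit_path p x y \<and> ned x y = ratio p" unfolding nd S_def ratio_def by blast
  have "\<forall>p. edit_path p x y \<longrightarrow> ned x y \<le> ratio p"
  proof (intro allI impI)
    fix p assume "edit_path p x y"
    then have "real (wgt p) / real (length p) \<in> S" unfolding S_def by blast
    then show "ned x y \<le> ratio p" unfolding nd ratio_def by (rule Min_le[OF fin])
  qed
  then show ?thesis using A by blast
qed

lemma ratio_mono:
  fixes w' w l' l d :: nat
  assumes "w' + d = w" "l' + d = l" "w \<le> l"
  shows "real w' / real l' \<le> real w / real l"
proof (cases "l' = 0")
  case True then show ?thesis by simp
next
  case False
  have "w' \<le> l'" using assms by simp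
  then have "w' * d \<le> l' * d" by simp
  moreover have "w' * l = w' * l' + w' * d" using assms(2) by (auto simp: algebra_simps)
  moreover have "w * l' = w' * l' + l' * d" using assms(1) by (auto simp: algebra_simps)
  ultimately have "w' * l \<le> w * l'" by linarith
  then have "real w' * real l \<le> real w * real l'" by (metis of_nat_le_iff of_nat_mult)
  moreover have "0 < l" using False assms by simp
  ultimately show ?thesis using False by (simp add: divide_simps)
qed

lemma reduce:
  assumes nfa: "nfa Q \<delta> I F" and yL: "y \<in> nfa_lang \<delta> I F" and ep: "edit_path p x y"
  shows "\<exists>y' p'. y' \<in> nfa_lang \<delta> I F \<and> edit_path p' x y' \<and> length p' \<le> card Q * (length x + 1)
     \<and> ratio p' \<le> ratio p"
proof -
  obtain qf where qf: "qf \<in> F" "qf \<in> nfa_run \<delta> I y" using yL unfolding nfa_lang_def by blast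
  then obtain q0 where q0: "q0 \<in> I" "qf \<in> nfa_run \<delta> {q0} y" using run_union[of \<delta> I y] by blast
  have q0Q: "q0 \<in> Q" using q0(1) nfa unfolding nfa_def by blast
  have "ew \<delta> q0 x p y qf" using ew_complete[OF ep q0(2)] .
  then obtain w s r y2 d where M: "s \<in> nfa_run \<delta> {q0} w" "ew \<delta> s x r y2 qf" "length w < card Q"
     "length r \<le> card Q * length x" "wgt (ins w @ r) + d = wgt p"
     "length (ins w @ r) + d = length p"
    using main_walk[OF _ nfa q0Q] by blast
  have E: "ew \<delta> q0 x (ins w @ r) (w @ y2) qf" using ew_ins_list[OF M(1,2)] .
  have "edit_path (ins w @ r) x (w @ y2)" "qf \<in> nfa_run \<delta> {q0} (w @ y2)"
    using ew_sound[OF E] by auto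
  moreover have "w @ y2 \<in> nfa_lang \<delta> I F"
    using calculation(2) qf(1) q0(1) run_union[of \<delta> I "w @ y2"] unfolding nfa_lang_def by blast
  moreover have "length (ins w @ r) \<le> card Q * (length x + 1)" using M(3,4) by simp
  moreover have "ratio (ins w @ r) \<le> ratio p"
    unfolding ratio_def using ratio_mono[OF M(5) M(6) wgt_le] .
  ultimately show ?thesis by blast
qed

theorem mainTheorem14:
  fixes x :: "('a::finite) list" and Y :: "'a list set"
    and Q :: "'s set" and \<delta> :: "'s \<Rightarrow> 'a \<Rightarrow> 's set" and I F :: "'s set" and n :: nat
  assumes "nfa Q \<delta> I F" and "card Q = n" and "Y = nfa_lang \<delta> I F" and "Y \<noteq> {}"
  shows "\<exists>yx\<in>Y. ned x yx = (INF y\<in>Y. ned x y) \<and>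
           (\<exists>p. edit_path p x yx \<and> real (wgt p) / real (length p) = ned x yx
                \<and> length p \<le> n * (length x + 1))"
proof -
  define N where "N = n * (length x + 1)"
  define C where "C = {(y', p'). y' \<in> Y \<and> edit_path p' x y' \<and> length p' \<le> N}"
  define RS where "RS = (\<lambda>(y', p'). ratio p') ` C"
  have "RS \<subseteq> {ratio p | p. (\<exists>y'. y' \<in> Y \<and> edit_path p x y') \<and> length p \<le> N}"
    unfolding RS_def C_def by auto
  then have fin: "finite RS" by (rule finite_subset[OF _ ratio_finite])
  have red: "\<exists>c\<in>C. ratio (snd c) \<le> ratio p" if yY: "y \<in> Y" and ep: "edit_path p x y" for y p
  proof -
    have yL: "y \<in> nfa_lang \<delta> I F" using yY assms(3) by simp
    obtain y' p' where h: "y' \<in> nfa_lang \<delta> I F" "edit_path p' x y'"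
      "length p' \<le> card Q * (length x + 1)" "ratio p' \<le> ratio p"
      using reduce[OF assms(1) yL ep] by blast
    have "(y', p') \<in> C" unfolding C_def N_def using h assms(2,3) by simp
    then show ?thesis using h(4) by (intro bexI[of _ "(y', p')"]) simp_all
  qed
  obtain y0 where y0: "y0 \<in> Y" using assms(4) by blast
  obtain p0 where "edit_path p0 x y0" using ep_exists by blast
  then obtain c0 where "c0 \<in> C" using red y0 by blast
  then have ne: "RS \<noteq> {}" unfolding RS_def by blast
  define r where "r = Min RS"
  have "r \<in> RS" unfolding r_def using Min_in[OF fin ne] .
  then obtain ys ps where yp: "(ys, ps) \<in> C" "ratio ps = r" unfolding RS_def by auto
  have ysY: "ys \<in> Y" and eps: "edit_path ps x ys" and lps: "length ps \<le> N"
    using yp(1) unfolding C_def by auto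
  have lower: "r \<le> ned x y" if yY: "y \<in> Y" for y
  proof -
    obtain p where p: "edit_path p x y" "ned x y = ratio p" using ned_props[of x y] by blast
    obtain c where c: "c \<in> C" "ratio (snd c) \<le> ratio p" using red[OF yY p(1)] by blast
    have "ratio (snd c) = (\<lambda>(y', p'). ratio p') c" by (simp add: case_prod_beta)
    then have "ratio (snd c) \<in> RS" unfolding RS_def using c(1) by (simp add: image_eqI)
    then have "r \<le> ratio (snd c)" unfolding r_def by (rule Min_le[OF fin])
    then show ?thesis using c(2) p(2) by simp
  qed
  have "ned x ys \<le> ratio ps" using ned_props[of x ys] eps by blast
  then have nys: "ned x ys = r" using lower[OF ysY] yp(2) by simp
  have inf: "(INF y\<in>Y. ned x y) = r"
    by (rule cInf_eq_minimum) (use ysY nys lower in auto)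
  show ?thesis
    using ysY nys inf eps lps yp(2) unfolding N_def ratio_def by auto
qed


end
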